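(* Let $T$ be a tree such that every vertex of $A_T$ has degree at most $3$ in $T$. Then $|D_T|\le 2|A_T|+1$, with equality only if $T[A_T\cup D_T]$ is connected, every vertex of $A_T$ has degree $3$, $A_T$ is independent and $C_T=\emptyset$; moreover $\nu(T)\geq \frac{n(T)-1}{3}$.
   Context: $\nu(T)$ is the matching number and $n(T)$ the number of vertices. Gallai–Edmonds sets: $D_T$ is the set of vertices not covered by at least one maximum matching of $T$, $A_T=N_T(D_T)\setminus D_T$, and $C_T=V(T)\setminus(A_T\cup D_T)$. *)

theory Defs
  imports Complex_Main
begin

definition simple_graph :: "'a set \<Rightarrow> 'a set set \<Rightarrow> bool" where
  "simple_graph V E \<longleftrightarrow> finite V \<and>
     (\<forall>e\<in>E. \<exists>u v. e = {u, v} \<and> u \<noteq> v \<and> u \<in> V \<and> v \<in> V)"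

definition walk :: "'a set set \<Rightarrow> 'a list \<Rightarrow> bool" where
  "walk E xs \<longleftrightarrow> xs \<noteq> [] \<and> (\<forall>i < length xs - 1. {xs ! i, xs ! (i + 1)} \<in> E)"

definition connected_graph :: "'a set \<Rightarrow> 'a set set \<Rightarrow> bool" where
  "connected_graph V E \<longleftrightarrow>
     (\<forall>u\<in>V. \<forall>v\<in>V. \<exists>xs. walk E xs \<and> set xs \<subseteq> V \<and> hd xs = u \<and> last xs = v)"

definition is_cycle :: "'a set set \<Rightarrow> 'a list \<Rightarrow> bool" where
  "is_cycle E xs \<longleftrightarrow> length xs \<ge> 3 \<and> distinct xs \<and> walk E xs \<and> {last xs, hd xs} \<in> E"

definition is_tree :: "'a set \<Rightarrow> 'a set set \<Rightarrow> bool" where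
  "is_tree V E \<longleftrightarrow> simple_graph V E \<and> V \<noteq> {} \<and> connected_graph V E \<and>
     \<not> (\<exists>xs. is_cycle E xs)"

definition induced_edges :: "'a set set \<Rightarrow> 'a set \<Rightarrow> 'a set set" where
  "induced_edges E S = {e \<in> E. e \<subseteq> S}"

definition degree :: "'a set set \<Rightarrow> 'a \<Rightarrow> nat" where
  "degree E v = card {e \<in> E. v \<in> e}"

definition neighbours :: "'a set set \<Rightarrow> 'a \<Rightarrow> 'a set" where
  "neighbours E v = {u. {u, v} \<in> E}"

definition independent_set :: "'a set set \<Rightarrow> 'a set \<Rightarrow> bool" where
  "independent_set E S \<longleftrightarrow> (\<forall>u\<in>S. \<forall>v\<in>S. {u, v} \<notin> E)"

definition matching :: "'a set set \<Rightarrow> 'a set set \<Rightarrow> bool" where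
  "matching E M \<longleftrightarrow> M \<subseteq> E \<and> (\<forall>e1\<in>M. \<forall>e2\<in>M. e1 \<noteq> e2 \<longrightarrow> e1 \<inter> e2 = {})"

definition matching_number :: "'a set set \<Rightarrow> nat" where
  "matching_number E = Max (card ` {M. matching E M})"

definition max_matching :: "'a set set \<Rightarrow> 'a set set \<Rightarrow> bool" where
  "max_matching E M \<longleftrightarrow> matching E M \<and> card M = matching_number E"

definition GE_D :: "'a set \<Rightarrow> 'a set set \<Rightarrow> 'a set" where
  "GE_D V E = {v \<in> V. \<exists>M. max_matching E M \<and> v \<notin> \<Union>M}"

definition GE_A :: "'a set \<Rightarrow> 'a set set \<Rightarrow> 'a set" where
  "GE_A V E = (\<Union>v\<in>GE_D V E. neighbours E v) - GE_D V E"

definition GE_C :: "'a set \<Rightarrow> 'a set set \<Rightarrow> 'a set" where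
  "GE_C V E = V - (GE_A V E \<union> GE_D V E)"

end

theory Submission
  imports Defs
begin

lemma sg_edge: "simple_graph V E \<Longrightarrow> e \<in> E \<Longrightarrow> \<exists>u v. e = {u,v} \<and> u \<noteq> v \<and> u \<in> V \<and> v \<in> V"
  unfolding simple_graph_def by (elim conjE ballE) (assumption | simp)+

lemma sg_edge_sub: "simple_graph V E \<Longrightarrow> e \<in> E \<Longrightarrow> e \<subseteq> V"
proof -
  assume a: "simple_graph V E" "e \<in> E"
  obtain u v where "e = {u,v}" "u \<in> V" "v \<in> V" using sg_edge[OF a] by blast
  then show ?thesis by simp
qed

lemma sg_edge_ne:
  assumes "simple_graph V E" "{a,b} \<in> E" shows "a \<noteq> b \<and> a \<in> V \<and> b \<in> V"
proof -
  obtain u v where uv: "{a,b} = {u,v}" "u \<noteq> v" "u \<in> V" "v \<in> V" using sg_edge[OF assms] by blast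
  then show ?thesis by (auto simp: doubleton_eq_iff)
qed

lemma sg_finE: "simple_graph V E \<Longrightarrow> finite E"
proof -
  assume a: "simple_graph V E"
  then have "E \<subseteq> Pow V" using sg_edge_sub by blast
  moreover have "finite V" using a unfolding simple_graph_def by simp
  ultimately show ?thesis by (meson finite_Pow_iff finite_subset)
qed

lemma sg_edge_x:
  assumes "simple_graph V E" "e \<in> E" "x \<in> e"
  shows "\<exists>y. e = {x,y} \<and> y \<noteq> x \<and> x \<in> V \<and> y \<in> V"
proof -
  obtain u v where uv: "e = {u,v}" "u \<noteq> v" "u \<in> V" "v \<in> V" using sg_edge[OF assms(1,2)] by blast
  then have "x = u \<or> x = v" using assms(3) by blast
  then show ?thesis
  proof
    assume "x = u" then show ?thesis using uv by blast
  next
    assume "x = v" then show ?thesis using uv by (intro exI[of _ u]) (auto simp: insert_commute)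
  qed
qed

lemma matching_fin: "finite E \<Longrightarrow> matching E M \<Longrightarrow> finite M"
  unfolding matching_def using finite_subset by blast

lemma matchings_fin: "finite E \<Longrightarrow> finite {M. matching E M}"
proof -
  assume "finite E"
  have "{M. matching E M} \<subseteq> Pow E" unfolding matching_def by blast
  then show ?thesis using \<open>finite E\<close> finite_subset by blast
qed

lemma card_le_nu: "finite E \<Longrightarrow> matching E M \<Longrightarrow> card M \<le> matching_number E"
  unfolding matching_number_def using matchings_fin by (intro Max_ge) auto

lemma matching_unique: "matching E M \<Longrightarrow> e1 \<in> M \<Longrightarrow> e2 \<in> M \<Longrightarrow> x \<in> e1 \<Longrightarrow> x \<in> e2 \<Longrightarrow> e1 = e2"
  unfolding matching_def by blast

lemma matching_empty: "matching E {}" unfolding matching_def by auto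

lemma augment_false:
  assumes "finite E" "max_matching E M" "e \<in> E" "e \<notin> M" "e \<inter> \<Union>M = {}"
  shows False
proof -
  have m: "matching E M" and c: "card M = matching_number E" using assms(2) unfolding max_matching_def by auto
  have "matching E (insert e M)" using m assms(3,5) unfolding matching_def by blast
  then have "card (insert e M) \<le> matching_number E" using card_le_nu assms(1) by blast
  moreover have "card (insert e M) = card M + 1" using matching_fin[OF assms(1) m] assms(4) by simp
  ultimately show False using c by simp
qed

lemma swap_max:
  assumes "finite E" "max_matching E M" "f \<in> M" "g \<in> E" "g \<notin> M"
    "\<And>h. h \<in> M \<Longrightarrow> h \<noteq> f \<Longrightarrow> h \<inter> g = {}"
  shows "max_matching E (insert g (M - {f}))"
proof -
  have m: "matching E M" and c: "card M = matching_number E" using assms(2) unfolding max_matching_def by auto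
  have fm: "finite M" using matching_fin[OF assms(1) m] .
  have "matching E (insert g (M - {f}))" using m assms(3,4,6) unfolding matching_def by blast
  moreover have "card (insert g (M - {f})) = card M" using fm assms(3,5)
    using card_Suc_Diff1[OF fm assms(3)] by (simp add: card_insert_disjoint)
  ultimately show ?thesis using c unfolding max_matching_def by simp
qed

lemma walk_Cons: "walk E xs \<Longrightarrow> {a, hd xs} \<in> E \<Longrightarrow> walk E (a # xs)"
  unfolding walk_def
proof (intro conjI allI impI)
  fix i assume w: "xs \<noteq> [] \<and> (\<forall>i<length xs - 1. {xs ! i, xs ! (i + 1)} \<in> E)" and h: "{a, hd xs} \<in> E"
    and i: "i < length (a # xs) - 1"
  show "{(a # xs) ! i, (a # xs) ! (i + 1)} \<in> E"
  proof (cases i)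
    case 0 then show ?thesis using h w by (simp add: hd_conv_nth)
  next
    case (Suc j)
    have "j < length xs - 1" using i Suc by simp
    then have "{xs ! j, xs ! (j + 1)} \<in> E" using w by blast
    then show ?thesis using Suc by simp
  qed
next
  show "a # xs \<noteq> []" by simp
qed

lemma walk_single: "walk E [x]" unfolding walk_def by simp


definition altP where
  "altP E M N x xs M' \<longleftrightarrow> max_matching E M' \<and> x \<notin> \<Union>M' \<and> xs \<noteq> [] \<and> hd xs = x \<and> distinct xs \<and> walk E xs
     \<and> (2 \<le> length xs \<longrightarrow> {x, xs ! 1} \<in> M)
     \<and> (\<forall>e\<in>M. e \<inter> set xs \<noteq> {} \<longrightarrow> e \<subseteq> set xs)
     \<and> (\<forall>e\<in>M. e \<inter> set xs = {} \<longrightarrow> e \<in> M')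
     \<and> (\<forall>e\<in>M'. e \<in> M \<or> e \<subseteq> set xs)
     \<and> (\<forall>v\<in>set xs. v \<noteq> x \<longrightarrow> (\<exists>e\<in>(M - N) \<union> (N - M). v \<in> e))"

lemma altPD:
  assumes "altP E M N x xs M'"
  shows "max_matching E M'" "x \<notin> \<Union>M'" "xs \<noteq> []" "hd xs = x" "distinct xs" "walk E xs"
    "2 \<le> length xs \<Longrightarrow> {x, xs ! 1} \<in> M"
    "\<And>e. e \<in> M \<Longrightarrow> e \<inter> set xs \<noteq> {} \<Longrightarrow> e \<subseteq> set xs"
    "\<And>e. e \<in> M \<Longrightarrow> e \<inter> set xs = {} \<Longrightarrow> e \<in> M'"
    "\<And>e. e \<in> M' \<Longrightarrow> e \<in> M \<or> e \<subseteq> set xs"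
    "\<And>v. v \<in> set xs \<Longrightarrow> v \<noteq> x \<Longrightarrow> \<exists>e\<in>(M - N) \<union> (N - M). v \<in> e"
  using assms unfolding altP_def by auto

lemma alt_path:
  assumes sg: "simple_graph V E" and mM: "max_matching E M"
  shows "max_matching E N \<Longrightarrow> x \<notin> \<Union>N \<Longrightarrow> \<exists>xs M'. altP E M N x xs M'"
proof (induction "card (N - M)" arbitrary: N x rule: less_induct)
  case less
  have fE: "finite E" using sg_finE[OF sg] .
  have mMm: "matching E M" using mM unfolding max_matching_def by auto
  have mNm: "matching E N" using less.prems unfolding max_matching_def by auto
  have ME: "M \<subseteq> E" using mMm unfolding matching_def by auto
  have NE: "N \<subseteq> E" using mNm unfolding matching_def by auto
  show ?case
  proof (cases "x \<in> \<Union>M")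
    case False
    have "altP E M N x [x] M"
      unfolding altP_def using mM False walk_single[of E x] by auto
    then show ?thesis by blast
  next
    case True
    then obtain e where e: "e \<in> M" "x \<in> e" by blast
    then obtain v1 where v1: "e = {x,v1}" "v1 \<noteq> x" using sg_edge_x[OF sg] ME by blast
    have xv1M: "{x,v1} \<in> M" using e v1 by simp
    have xv1N: "{x,v1} \<notin> N" using less.prems(2) by blast
    have "v1 \<in> \<Union>N"
    proof (rule ccontr)
      assume "v1 \<notin> \<Union>N"
      then have "{x,v1} \<inter> \<Union>N = {}" using less.prems(2) by blast
      then show False using augment_false[OF fE less.prems(1) _ xv1N] xv1M ME by blast
    qed
    then obtain f where f: "f \<in> N" "v1 \<in> f" by blast
    then obtain v2 where v2: "f = {v1,v2}" "v2 \<noteq> v1" using sg_edge_x[OF sg] NE by blast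
    have v1v2N: "{v1,v2} \<in> N" using f v2 by simp
    have v2x: "v2 \<noteq> x" using less.prems(2) v1v2N by blast
    have v1v2M: "{v1,v2} \<notin> M"
    proof
      assume "{v1,v2} \<in> M"
      then have "{v1,v2} = {x,v1}" using matching_unique[OF mMm _ xv1M, of "{v1,v2}" v1] by simp
      then show False using v2x v2 v1 by (auto simp: doubleton_eq_iff)
    qed
    define N' where "N' = insert {x,v1} (N - {{v1,v2}})"
    have mN': "max_matching E N'" unfolding N'_def
    proof (rule swap_max[OF fE less.prems(1) v1v2N])
      show "{x,v1} \<in> E" using xv1M ME by blast
      show "{x,v1} \<notin> N" by fact
      fix h assume h: "h \<in> N" "h \<noteq> {v1,v2}"
      show "h \<inter> {x,v1} = {}"
      proof (rule ccontr)
        assume "h \<inter> {x,v1} \<noteq> {}"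
        then have "x \<in> h \<or> v1 \<in> h" by blast
        then show False
        proof
          assume "x \<in> h" then show False using less.prems(2) h by blast
        next
          assume v1h: "v1 \<in> h" then show False using matching_unique[OF mNm h(1) v1v2N, of v1] h(2) v1h by simp
        qed
      qed
    qed
    have v2N': "v2 \<notin> \<Union>N'"
    proof
      assume "v2 \<in> \<Union>N'"
      then obtain h where h: "h \<in> N'" "v2 \<in> h" by blast
      show False
      proof (cases "h = {x,v1}")
        case True then show False using h v2x v2 by auto
      next
        case False
        then have "h \<in> N" "h \<noteq> {v1,v2}" using h unfolding N'_def by auto
        then show False using matching_unique[OF mNm _ v1v2N, of h v2] h by simp
      qed
    qed
    have fN: "finite N" using matching_fin[OF fE mNm] .
    have "N' - M = (N - M) - {{v1,v2}}" unfolding N'_def using xv1M by auto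
    then have lt: "card (N' - M) < card (N - M)"
      using v1v2N v1v2M fN by (metis DiffI card_Diff1_less finite_Diff)
    obtain ys M'' where alt: "altP E M N' v2 ys M''" using less.hyps[OF lt mN' v2N'] by blast
    note A = altPD[OF alt]
    have mM'': "matching E M''" using A(1) unfolding max_matching_def by auto
    have x_ys: "x \<notin> set ys"
    proof
      assume "x \<in> set ys"
      then obtain h where h: "h \<in> (M - N') \<union> (N' - M)" "x \<in> h" using A(11)[of x] v2x by blast
      show False
      proof (cases "h \<in> M")
        case True
        then have "h = {x,v1}" using matching_unique[OF mMm _ xv1M] h by simp
        then show False using h True unfolding N'_def by auto
      next
        case False
        then have "h \<in> N'" using h by auto
        then show False using h(2) less.prems(2) False xv1M unfolding N'_def by auto
      qed
    qed
    have v1_ys: "v1 \<notin> set ys"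
    proof
      assume "v1 \<in> set ys"
      then obtain h where h: "h \<in> (M - N') \<union> (N' - M)" "v1 \<in> h" using A(11)[of v1] v2 by blast
      show False
      proof (cases "h \<in> M")
        case True
        then have "h = {x,v1}" using matching_unique[OF mMm _ xv1M] h by simp
        then show False using h True unfolding N'_def by auto
      next
        case False
        then have "h \<in> N'" using h by auto
        then have "h \<in> N" "h \<noteq> {v1,v2}" using False xv1M unfolding N'_def by auto
        then show False using matching_unique[OF mNm _ v1v2N, of h v1] h by simp
      qed
    qed
    have xv1M'': "{x,v1} \<in> M''" using A(9)[OF xv1M] x_ys v1_ys by blast
    have v2M'': "v2 \<notin> \<Union>M''" using A(2) .
    define M' where "M' = insert {v1,v2} (M'' - {{x,v1}})"
    have mM': "max_matching E M'" unfolding M'_def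
    proof (rule swap_max[OF fE _ xv1M''])
      show "max_matching E M''" using A(1) .
      show "{v1,v2} \<in> E" using v1v2N NE by blast
      show "{v1,v2} \<notin> M''" using v2M'' by blast
      fix h assume h: "h \<in> M''" "h \<noteq> {x,v1}"
      show "h \<inter> {v1,v2} = {}"
      proof (rule ccontr)
        assume "h \<inter> {v1,v2} \<noteq> {}"
        then have "v1 \<in> h \<or> v2 \<in> h" by blast
        then show False
        proof
          assume v1h: "v1 \<in> h" then show False using matching_unique[OF mM'' h(1) xv1M'', of v1] h(2) v1h by simp
        next
          assume "v2 \<in> h" then show False using v2M'' h by blast
        qed
      qed
    qed
    have xM': "x \<notin> \<Union>M'"
    proof
      assume "x \<in> \<Union>M'"
      then obtain h where h: "h \<in> M'" "x \<in> h" by blast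
      show False
      proof (cases "h = {v1,v2}")
        case True then show False using h(2) True v2x v1(2) by auto
      next
        case False
        then have "h \<in> M''" "h \<noteq> {x,v1}" using h unfolding M'_def by auto
        then show False using matching_unique[OF mM'' _ xv1M'', of h x] h by simp
      qed
    qed
    have ysne: "ys \<noteq> []" and hdys: "hd ys = v2" using A(3,4) by auto
    have v2ys: "v2 \<in> set ys" using ysne hdys hd_in_set by fastforce
    define xs where "xs = x # v1 # ys"
    have setxs: "set xs = {x, v1} \<union> set ys" unfolding xs_def by auto
    have "altP E M N x xs M'"
      unfolding altP_def
    proof (intro conjI)
      show "max_matching E M'" by fact
      show "x \<notin> \<Union>M'" by fact
      show "xs \<noteq> []" "hd xs = x" unfolding xs_def by auto
      show "distinct xs" unfolding xs_def using A(5) x_ys v1_ys v1(2) by auto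
      have "walk E (v1 # ys)" using walk_Cons[OF A(6), of v1] hdys v1v2N NE by auto
      then show "walk E xs" unfolding xs_def using walk_Cons[of E "v1 # ys" x] xv1M ME by (simp add: subset_iff)
      show "2 \<le> length xs \<longrightarrow> {x, xs ! 1} \<in> M" unfolding xs_def using xv1M by simp
      show "\<forall>e\<in>M. e \<inter> set xs \<noteq> {} \<longrightarrow> e \<subseteq> set xs"
      proof (intro ballI impI)
        fix e assume e: "e \<in> M" "e \<inter> set xs \<noteq> {}"
        show "e \<subseteq> set xs"
        proof (cases "e \<inter> set ys = {}")
          case True
          have "e \<inter> {x,v1} \<noteq> {}" using e(2) True unfolding setxs by auto
          then obtain y where y: "y \<in> e" "y \<in> {x,v1}" by blast
          then have "e = {x,v1}" using matching_unique[OF mMm e(1) xv1M, of y] by simp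
          then show ?thesis using setxs by auto
        next
          case False then show ?thesis using A(8)[OF e(1)] setxs by blast
        qed
      qed
      show "\<forall>e\<in>M. e \<inter> set xs = {} \<longrightarrow> e \<in> M'"
      proof (intro ballI impI)
        fix e assume e: "e \<in> M" "e \<inter> set xs = {}"
        then have "e \<in> M''" using A(9)[of e] setxs by blast
        moreover have "e \<noteq> {x,v1}" using e setxs by auto
        ultimately show "e \<in> M'" unfolding M'_def by auto
      qed
      show "\<forall>e\<in>M'. e \<in> M \<or> e \<subseteq> set xs"
      proof (intro ballI)
        fix e assume "e \<in> M'"
        then have "e = {v1,v2} \<or> e \<in> M''" unfolding M'_def by auto
        then show "e \<in> M \<or> e \<subseteq> set xs"
        proof
          assume "e = {v1,v2}" then show ?thesis using setxs v2ys by auto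
        next
          assume "e \<in> M''" then show ?thesis using A(10)[of e] setxs by blast
        qed
      qed
      show "\<forall>v\<in>set xs. v \<noteq> x \<longrightarrow> (\<exists>e\<in>(M - N) \<union> (N - M). v \<in> e)"
      proof (intro ballI impI)
        fix v assume v: "v \<in> set xs" "v \<noteq> x"
        show "\<exists>e\<in>(M - N) \<union> (N - M). v \<in> e"
        proof (cases "v = v1")
          case True then show ?thesis using xv1M xv1N by blast
        next
          case False
          then have vys: "v \<in> set ys" using v setxs by auto
          show ?thesis
          proof (cases "v = v2")
            case True then show ?thesis using v1v2N v1v2M by blast
          next
            case False
            then obtain h where h: "h \<in> (M - N') \<union> (N' - M)" "v \<in> h" using A(11)[OF vys] False by blast
            have "h \<in> (M - N) \<union> (N - M)"
            proof (cases "h \<in> M")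
              case True
              then have "h \<notin> N'" using h by auto
              then have "h \<notin> N \<or> h = {v1,v2}" unfolding N'_def by auto
              then show ?thesis using True v1v2M by auto
            next
              case False
              then have "h \<in> N'" using h by auto
              then show ?thesis using False xv1M unfolding N'_def by auto
            qed
            then show ?thesis using h by blast
          qed
        qed
      qed
    qed
    then show ?thesis by blast
  qed
qed


lemma walk_take: "walk E xs \<Longrightarrow> 0 < m \<Longrightarrow> walk E (take m xs)"
  unfolding walk_def by auto

lemma cycle_take:
  assumes "distinct xs" "walk E xs" "k < length xs" "2 \<le> k" "{xs ! k, hd xs} \<in> E"
  shows "is_cycle E (take (Suc k) xs)"
  unfolding is_cycle_def
proof (intro conjI)
  show "3 \<le> length (take (Suc k) xs)" using assms by simp
  show "distinct (take (Suc k) xs)" using assms by simp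
  show "walk E (take (Suc k) xs)" using walk_take assms by blast
  have "xs \<noteq> []" using assms by auto
  then have "last (take (Suc k) xs) = xs ! k" using assms(3) by (simp add: last_conv_nth)
  moreover have "hd (take (Suc k) xs) = hd xs" using assms(3) by simp
  ultimately show "{last (take (Suc k) xs), hd (take (Suc k) xs)} \<in> E" using assms(5) by simp
qed

lemma tree_sg: "is_tree V E \<Longrightarrow> simple_graph V E" unfolding is_tree_def by auto
lemma tree_nocyc: "is_tree V E \<Longrightarrow> is_cycle E xs \<Longrightarrow> False" unfolding is_tree_def by auto

lemma in_list_nth: "v \<in> set xs \<Longrightarrow> \<exists>k<length xs. xs ! k = v"
  by (metis in_set_conv_nth)

lemma D_indep:
  assumes T: "is_tree V E" and d1: "d1 \<in> GE_D V E" and d2: "d2 \<in> GE_D V E"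
  shows "{d1,d2} \<notin> E"
proof
  assume ed: "{d1,d2} \<in> E"
  have sg: "simple_graph V E" using tree_sg[OF T] .
  have fE: "finite E" using sg_finE[OF sg] .
  have d12: "d1 \<noteq> d2" using sg_edge_ne[OF sg ed] by simp
  obtain M1 where M1: "max_matching E M1" "d1 \<notin> \<Union>M1" using d1 unfolding GE_D_def by auto
  obtain M2 where M2: "max_matching E M2" "d2 \<notin> \<Union>M2" using d2 unfolding GE_D_def by auto
  obtain xs M' where alt: "altP E M1 M2 d2 xs M'" using alt_path[OF sg M1(1) M2] by blast
  note A = altPD[OF alt]
  show False
  proof (cases "d1 \<in> set xs")
    case True
    then obtain k where k: "k < length xs" "xs ! k = d1" using in_list_nth[OF True] by (elim exE conjE) (rule that)
    have "k \<noteq> 0"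
    proof
      assume "k = 0"
      then have "xs ! k = hd xs" using A(3) by (simp add: hd_conv_nth)
      then have "d1 = d2" using k(2) A(4) by metis
      then show False using d12 by contradiction
    qed
    moreover have "k \<noteq> 1"
    proof
      assume k1: "k = 1"
      then have "2 \<le> length xs" using k by simp
      then have "{d2, xs ! 1} \<in> M1" using A(7) by blast
      then have "{d2, d1} \<in> M1" using k k1 by simp
      then show False using M1(2) by blast
    qed
    ultimately have k2: "2 \<le> k" by simp
    have "{xs ! k, hd xs} \<in> E" using k A(4) ed by simp
    then show False using cycle_take[OF A(5) A(6) k(1) k2] tree_nocyc[OF T] by blast
  next
    case False
    have d1M': "d1 \<notin> \<Union>M'"
    proof
      assume "d1 \<in> \<Union>M'"
      then obtain h where h: "h \<in> M'" "d1 \<in> h" by blast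
      then have "h \<in> M1 \<or> h \<subseteq> set xs" using A(10) by blast
      then show False using h M1(2) False by blast
    qed
    have d2M': "d2 \<notin> \<Union>M'" using A(2) .
    have "{d1,d2} \<notin> M'" using d2M' by blast
    moreover have "{d1,d2} \<inter> \<Union>M' = {}" using d1M' d2M' by blast
    ultimately show False using augment_false[OF fE A(1) ed] by blast
  qed
qed

lemma partner_D:
  assumes T: "is_tree V E" and a: "a \<in> GE_A V E" and M: "max_matching E M" and ab: "{a,b} \<in> M"
  shows "b \<in> GE_D V E"
proof -
  have sg: "simple_graph V E" using tree_sg[OF T] .
  have fE: "finite E" using sg_finE[OF sg] .
  have mM: "matching E M" using M unfolding max_matching_def by auto
  have abE: "{a,b} \<in> E" using mM ab unfolding matching_def by auto
  have ab_ne: "a \<noteq> b" "b \<in> V" using sg_edge_ne[OF sg abE] by simp_all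
  obtain d where d: "d \<in> GE_D V E" "{a,d} \<in> E" "a \<notin> GE_D V E"
    using a unfolding GE_A_def neighbours_def by auto
  have ad: "a \<noteq> d" using d by auto
  show ?thesis
  proof (cases "b = d")
    case True then show ?thesis using d by simp
  next
    case bd: False
    obtain M0 where M0: "max_matching E M0" "d \<notin> \<Union>M0" using d unfolding GE_D_def by auto
    obtain xs M' where alt: "altP E M M0 d xs M'" using alt_path[OF sg M M0] by blast
    note A = altPD[OF alt]
    show ?thesis
    proof (cases "a \<in> set xs")
      case True
      then obtain k where k: "k < length xs" "xs ! k = a" using in_list_nth[OF True] by (elim exE conjE) (rule that)
      have "k \<noteq> 0"
    proof
      assume "k = 0"
      then have "xs ! k = hd xs" using A(3) by (simp add: hd_conv_nth)
      then have "a = d" using k(2) A(4) by metis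
      then show False using ad by contradiction
    qed
      moreover have "k \<noteq> 1"
      proof
        assume k1: "k = 1"
        then have "2 \<le> length xs" using k by simp
        then have "{d, xs ! 1} \<in> M" using A(7) by blast
        then have da: "{d, a} \<in> M" using k k1 by simp
        have "a \<in> {d,a}" by simp
        then have "{d,a} = {a,b}" using matching_unique[OF mM da ab, of a] by simp
        then show False using bd ad by (auto simp: doubleton_eq_iff)
      qed
      ultimately have k2: "2 \<le> k" by simp
      have "{xs ! k, hd xs} \<in> E" using k A(4) d(2) by simp
      then show ?thesis using cycle_take[OF A(5) A(6) k(1) k2] tree_nocyc[OF T] by blast
    next
      case False
      have "{a,b} \<inter> set xs = {}"
      proof (rule ccontr)
        assume "{a,b} \<inter> set xs \<noteq> {}"
        then have "{a,b} \<subseteq> set xs" using A(8)[OF ab] by blast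
        then show False using False by simp
      qed
      then have abM': "{a,b} \<in> M'" using A(9)[OF ab] by blast
      have dM': "d \<notin> \<Union>M'" using A(2) .
      have mM': "matching E M'" using A(1) unfolding max_matching_def by auto
      have mx: "max_matching E (insert {a,d} (M' - {{a,b}}))"
      proof (rule swap_max[OF fE A(1) abM'])
        show "{a,d} \<in> E" by fact
        show "{a,d} \<notin> M'" using dM' by blast
        fix h assume h: "h \<in> M'" "h \<noteq> {a,b}"
        show "h \<inter> {a,d} = {}"
        proof (rule ccontr)
          assume "h \<inter> {a,d} \<noteq> {}"
          then have "a \<in> h \<or> d \<in> h" by blast
          then show False
          proof
            assume ah: "a \<in> h" then show False using matching_unique[OF mM' h(1) abM', of a] h(2) by simp
          next
            assume "d \<in> h" then show False using dM' h by blast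
          qed
        qed
      qed
      have "b \<notin> \<Union>(insert {a,d} (M' - {{a,b}}))"
      proof
        assume "b \<in> \<Union>(insert {a,d} (M' - {{a,b}}))"
        then obtain h where h: "h \<in> insert {a,d} (M' - {{a,b}})" "b \<in> h" by blast
        show False
        proof (cases "h = {a,d}")
          case True then show False using h(2) ab_ne(1) bd by simp
        next
          case False
          then have "h \<in> M'" "h \<noteq> {a,b}" using h(1) by auto
          then show False using matching_unique[OF mM' _ abM', of h b] h(2) by simp
        qed
      qed
      then show ?thesis using mx ab_ne unfolding GE_D_def by blast
    qed
  qed
qed


lemma walk_mono: "walk E' xs \<Longrightarrow> E' \<subseteq> E \<Longrightarrow> walk E xs"
  unfolding walk_def by blast

lemma walk_drop: "walk E xs \<Longrightarrow> j < length xs \<Longrightarrow> walk E (drop j xs)"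
  unfolding walk_def by auto

lemma walk_snoc: "walk E xs \<Longrightarrow> {last xs, u} \<in> E \<Longrightarrow> walk E (xs @ [u])"
  unfolding walk_def
proof (intro conjI allI impI)
  fix i assume w: "xs \<noteq> [] \<and> (\<forall>i<length xs - 1. {xs ! i, xs ! (i + 1)} \<in> E)"
    and h: "{last xs, u} \<in> E" and i: "i < length (xs @ [u]) - 1"
  show "{(xs @ [u]) ! i, (xs @ [u]) ! (i + 1)} \<in> E"
  proof (cases "i = length xs - 1")
    case True then show ?thesis using w h by (simp add: nth_append last_conv_nth)
  next
    case False
    have il: "i < length xs - 1" using i False by simp
    then have "{xs!i, xs!(i+1)} \<in> E" using w by blast
    moreover have "(xs@[u])!i = xs!i" "(xs@[u])!(i+1) = xs!(i+1)" using il by (auto simp: nth_append)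
    ultimately show ?thesis by simp
  qed
qed simp

lemma leaf_exists:
  assumes sg: "simple_graph V E" and nc: "\<And>xs. \<not> is_cycle E xs"
    and fS: "finite S" and ne: "S \<noteq> {}"
  shows "\<exists>v\<in>S. card {e \<in> induced_edges E S. v \<in> e} \<le> 1"
proof -
  define ES where "ES = induced_edges E S"
  have ESE: "ES \<subseteq> E" unfolding ES_def induced_edges_def by auto
  define P where "P = {xs. distinct xs \<and> set xs \<subseteq> S \<and> walk ES xs}"
  have fP: "finite P" unfolding P_def using finite_subset_distinct[OF fS]
    by (rule rev_finite_subset) auto
  obtain s where s: "s \<in> S" using ne by blast
  have sP: "[s] \<in> P" unfolding P_def using s walk_single by auto
  define m where "m = Max (length ` P)"
  obtain xs where xs: "xs \<in> P" "length xs = m" unfolding m_def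
  proof -
    have "Max (length ` P) \<in> length ` P" using fP sP by (intro Max_in) auto
    then show ?thesis using that unfolding m_def by force
  qed
  have mx: "\<And>ys. ys \<in> P \<Longrightarrow> length ys \<le> length xs" using xs fP m_def by simp
  have xsP: "distinct xs" "set xs \<subseteq> S" "walk ES xs" using xs unfolding P_def by auto
  have xne: "xs \<noteq> []" using xsP(3) unfolding walk_def by auto
  define v where "v = last xs"
  have vS: "v \<in> S" using xne xsP(2) v_def by auto
  have "{e \<in> ES. v \<in> e} \<subseteq> {{v, xs ! (length xs - 2)}}"
  proof
    fix e assume e: "e \<in> {e \<in> ES. v \<in> e}"
    then have eE: "e \<in> E" "e \<subseteq> S" using ESE unfolding ES_def induced_edges_def by auto
    have ve: "v \<in> e" using e by simp
    obtain u where u: "e = {v,u}" "u \<noteq> v" using sg_edge_x[OF sg eE(1) ve] by (elim exE conjE) (rule that)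
    have uS: "u \<in> S" using eE u by auto
    have uxs: "u \<in> set xs"
    proof (rule ccontr)
      assume nu: "u \<notin> set xs"
      have "walk ES (xs @ [u])" using walk_snoc[OF xsP(3)] e u v_def by auto
      then have "xs @ [u] \<in> P" unfolding P_def using xsP nu uS by auto
      then show False using mx by fastforce
    qed
    obtain j where j: "j < length xs" "xs ! j = u" using in_list_nth[OF uxs] by (elim exE conjE) (rule that)
    have jl: "j \<noteq> length xs - 1"
    proof
      assume "j = length xs - 1"
      then have "xs ! j = last xs" using xne by (simp add: last_conv_nth)
      then show False using j u v_def by simp
    qed
    have "j = length xs - 2"
    proof (rule ccontr)
      assume "j \<noteq> length xs - 2"
      then have jj: "j + 2 < length xs" using j jl by linarith
      have "is_cycle E (drop j xs)" unfolding is_cycle_def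
      proof (intro conjI)
        show "3 \<le> length (drop j xs)" using jj by simp
        show "distinct (drop j xs)" using xsP by simp
        show "walk E (drop j xs)" using walk_drop[OF walk_mono[OF xsP(3) ESE] j(1)] .
        have "last (drop j xs) = v" using j v_def by simp
        moreover have "hd (drop j xs) = u" using j by (simp add: hd_drop_conv_nth)
        ultimately show "{last (drop j xs), hd (drop j xs)} \<in> E" using eE u by simp
      qed
      then show False using nc by blast
    qed
    then show "e \<in> {{v, xs ! (length xs - 2)}}" using u j by simp
  qed
  then have "card {e \<in> ES. v \<in> e} \<le> card {{v, xs ! (length xs - 2)}}"
    by (intro card_mono) auto
  then have "card {e \<in> ES. v \<in> e} \<le> 1" by simp
  then show ?thesis using vS ES_def by blast
qed

lemma forest_edges:
  assumes sg: "simple_graph V E" and nc: "\<And>xs. \<not> is_cycle E xs"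
  shows "finite S \<Longrightarrow> S \<noteq> {} \<Longrightarrow> card (induced_edges E S) \<le> card S - 1"
proof (induction "card S" arbitrary: S rule: less_induct)
  case less
  have fE: "finite E" using sg_finE[OF sg] .
  have fin: "\<And>T. finite (induced_edges E T)" unfolding induced_edges_def using fE by auto
  obtain v where v: "v \<in> S" "card {e \<in> induced_edges E S. v \<in> e} \<le> 1"
    using leaf_exists[OF sg nc less.prems] by blast
  show ?case
  proof (cases "S = {v}")
    case True
    have "induced_edges E S = {}"
    proof (rule ccontr)
      assume "induced_edges E S \<noteq> {}"
      then obtain e where e: "e \<in> E" "e \<subseteq> {v}" unfolding induced_edges_def True by auto
      obtain u w where "e = {u,w}" "u \<noteq> w" using sg_edge[OF sg e(1)] by (elim exE conjE) (rule that)
      then show False using e(2) by auto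
    qed
    then show ?thesis by simp
  next
    case False
    define S' where "S' = S - {v}"
    have S'ne: "S' \<noteq> {}" using False v S'_def by auto
    have lt: "card S' < card S" unfolding S'_def using card_Diff1_less[OF less.prems(1) v(1)] .
    have IH: "card (induced_edges E S') \<le> card S' - 1"
      using less.hyps[OF lt] less.prems S'ne S'_def by auto
    have "induced_edges E S \<subseteq> induced_edges E S' \<union> {e \<in> induced_edges E S. v \<in> e}"
      unfolding induced_edges_def S'_def by auto
    then have "card (induced_edges E S) \<le> card (induced_edges E S') + card {e \<in> induced_edges E S. v \<in> e}"
    proof -
      have f2: "finite {e \<in> induced_edges E S. v \<in> e}" using fin[of S] by simp
      have "card (induced_edges E S) \<le> card (induced_edges E S' \<union> {e \<in> induced_edges E S. v \<in> e})"
        using \<open>induced_edges E S \<subseteq> _\<close> fin[of S'] f2 by (intro card_mono) auto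
      also have "\<dots> \<le> card (induced_edges E S') + card {e \<in> induced_edges E S. v \<in> e}"
        by (rule card_Un_le)
      finally show ?thesis .
    qed
    also have "\<dots> \<le> card S' - 1 + 1" using IH v by simp
    also have "\<dots> = card S - 1"
    proof -
      have "card S' = card S - 1" unfolding S'_def using less.prems(1) v(1) by (simp add: card_Diff_singleton)
      moreover have "card S' > 0" using S'ne less.prems(1) unfolding S'_def by (simp add: card_gt_0_iff)
      ultimately show ?thesis by linarith
    qed
    finally show ?thesis .
  qed
qed

lemma walk_tl: assumes "walk E (a # xs)" "xs \<noteq> []" shows "walk E xs"
  unfolding walk_def
proof (intro conjI allI impI)
  show "xs \<noteq> []" by fact
  fix i assume i: "i < length xs - 1"
  then have "Suc i < length (a#xs) - 1" by simp
  then have "{(a#xs)!Suc i, (a#xs)!(Suc i + 1)} \<in> E" using assms(1) unfolding walk_def by blast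
  then show "{xs ! i, xs ! (i + 1)} \<in> E" by simp
qed

lemma crossing_walk:
  "walk E xs \<Longrightarrow> hd xs \<in> S \<Longrightarrow> last xs \<notin> S \<Longrightarrow> \<exists>i<length xs - 1. xs ! i \<in> S \<and> xs ! (i+1) \<notin> S"
proof (induction xs)
  case Nil then show ?case unfolding walk_def by simp
next
  case (Cons a xs)
  show ?case
  proof (cases "xs = []")
    case True then show ?thesis using Cons.prems by simp
  next
    case False
    show ?thesis
    proof (cases "hd xs \<in> S")
      case True
      have w: "walk E xs" using walk_tl[OF Cons.prems(1) False] .
      have l: "last xs \<notin> S" using Cons.prems(3) False by simp
      obtain i where i: "i < length xs - 1" "xs ! i \<in> S" "xs ! (i+1) \<notin> S"
        using Cons.IH[OF w True l] by (elim exE conjE) (rule that)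
      have "Suc i < length (a # xs) - 1" using i(1) by simp
      moreover have "(a # xs) ! Suc i \<in> S" "(a # xs) ! (Suc i + 1) \<notin> S" using i(2,3) by simp_all
      ultimately show ?thesis by blast
    next
      case nh: False
      have "0 < length (a # xs) - 1" using False by simp
      moreover have "(a # xs) ! 0 \<in> S" using Cons.prems(2) by simp
      moreover have "(a # xs) ! (0 + 1) \<notin> S" using nh False by (simp add: hd_conv_nth)
      ultimately show ?thesis by blast
    qed
  qed
qed

lemma crossing_edge:
  assumes "connected_graph V E" "S \<subseteq> V" "s \<in> S" "t \<in> V" "t \<notin> S"
  shows "\<exists>u w. u \<in> S \<and> w \<in> V \<and> w \<notin> S \<and> {u,w} \<in> E"
proof -
  obtain xs where xs: "walk E xs" "set xs \<subseteq> V" "hd xs = s" "last xs = t"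
    using assms unfolding connected_graph_def by blast
  have hl: "hd xs \<in> S" "last xs \<notin> S" using xs assms by simp_all
  obtain i where i: "i < length xs - 1" "xs ! i \<in> S" "xs ! (i+1) \<notin> S"
    using crossing_walk[OF xs(1) hl] by (elim exE conjE) (rule that)
  have "{xs ! i, xs ! (i+1)} \<in> E" using xs(1) i unfolding walk_def by auto
  moreover have "xs ! (i+1) \<in> V" using xs(2) i by (simp add: subset_iff)
  ultimately show ?thesis using i by blast
qed

lemma connected_edges:
  assumes sg: "simple_graph V E" and c: "connected_graph V E" and ne: "V \<noteq> {}"
  shows "card V - 1 \<le> card E"
proof -
  have fV: "finite V" using sg unfolding simple_graph_def by auto
  have fE: "finite E" using sg_finE[OF sg] .
  have grow: "\<And>k. 1 \<le> k \<Longrightarrow> k \<le> card V \<Longrightarrow> \<exists>S F. S \<subseteq> V \<and> card S = k \<and> F \<subseteq> E \<and> (\<forall>e\<in>F. e \<subseteq> S) \<and> k - 1 \<le> card F"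
  proof -
    fix k :: nat assume "1 \<le> k" "k \<le> card V"
    then show "\<exists>S F. S \<subseteq> V \<and> card S = k \<and> F \<subseteq> E \<and> (\<forall>e\<in>F. e \<subseteq> S) \<and> k - 1 \<le> card F"
    proof (induction k rule: dec_induct)
      case base
      obtain v where "v \<in> V" using ne by blast
      then show ?case by (intro exI[of _ "{v}"] exI[of _ "{}"]) auto
    next
      case (step k)
      then obtain S F where SF: "S \<subseteq> V" "card S = k" "F \<subseteq> E" "\<forall>e\<in>F. e \<subseteq> S" "k - 1 \<le> card F" by auto
      have "S \<noteq> V" using SF step by auto
      then obtain t where t: "t \<in> V" "t \<notin> S" using SF by blast
      have "S \<noteq> {}" using SF step by auto
      then obtain s where s: "s \<in> S" by blast
      obtain u w where uw: "u \<in> S" "w \<in> V" "w \<notin> S" "{u,w} \<in> E"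
        using crossing_edge[OF c SF(1) s t] by blast
      have fS: "finite S" using SF fV finite_subset by blast
      have fF: "finite F" using SF fE finite_subset by blast
      have nF: "{u,w} \<notin> F"
      proof
        assume "{u,w} \<in> F"
        then have "{u,w} \<subseteq> S" using SF(4) by blast
        then show False using uw(3) by simp
      qed
      have c1: "card (insert w S) = Suc k" using card_insert_disjoint[OF fS uw(3)] SF(2) by simp
      have c2: "card (insert {u,w} F) = Suc (card F)" using card_insert_disjoint[OF fF nF] .
      have s1: "insert w S \<subseteq> V" using SF(1) uw(2) by simp
      have s2: "insert {u,w} F \<subseteq> E" using SF(3) uw(4) by simp
      have s3: "\<forall>e\<in>insert {u,w} F. e \<subseteq> insert w S" using SF(4) uw(1) by auto
      have s4: "Suc k - 1 \<le> card (insert {u,w} F)" using c2 SF(5) by simp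
      show ?case using s1 c1 s2 s3 s4 by blast
    qed
  qed
  have "1 \<le> card V" using ne fV by (simp add: Suc_leI card_gt_0_iff)
  then obtain S F where SF: "F \<subseteq> E" "card V - 1 \<le> card F"
    using grow[of "card V"] by blast
  then show ?thesis using card_mono[OF fE SF(1)] by linarith
qed


lemma card_filter_sum: "finite X \<Longrightarrow> (\<Sum>x\<in>X. if P x then 1 else 0) = card {x\<in>X. P x}"
  by (simp add: sum.inter_filter[symmetric])

lemma sg_card2: "simple_graph V E \<Longrightarrow> e \<in> E \<Longrightarrow> card e = 2"
proof -
  assume a: "simple_graph V E" "e \<in> E"
  obtain u v where "e = {u,v}" "u \<noteq> v" using sg_edge[OF a] by (elim exE conjE) (rule that)
  then show ?thesis by simp
qed

lemma degree_sum:
  assumes "finite A" "finite E"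
  shows "(\<Sum>a\<in>A. degree E a) = (\<Sum>e\<in>E. card (e \<inter> A))"
proof -
  have "(\<Sum>a\<in>A. degree E a) = (\<Sum>a\<in>A. \<Sum>e\<in>E. if a \<in> e then 1 else 0)"
    unfolding degree_def using assms by (simp add: card_filter_sum)
  also have "\<dots> = (\<Sum>e\<in>E. \<Sum>a\<in>A. if a \<in> e then 1 else 0)" by (rule sum.swap)
  also have "\<dots> = (\<Sum>e\<in>E. card (e \<inter> A))"
    using assms by (simp add: card_filter_sum Int_def conj_commute)
  finally show ?thesis .
qed

lemma matching_card_union:
  assumes sg: "simple_graph V E" and m: "matching E M"
  shows "card (\<Union>M) = 2 * card M"
proof -
  have ME: "M \<subseteq> E" using m unfolding matching_def by auto
  have c2: "\<And>e. e \<in> M \<Longrightarrow> card e = 2" using sg_card2[OF sg] ME by blast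
  have "card (\<Union>M) = sum card M"
  proof (rule card_Union_disjoint)
    show "pairwise disjnt M" using m unfolding matching_def pairwise_def disjnt_def by blast
    show "\<And>A. A \<in> M \<Longrightarrow> finite A" using c2 by (metis card_eq_0_iff zero_neq_numeral)
  qed
  also have "\<dots> = 2 * card M" using c2 by simp
  finally show ?thesis .
qed

lemma exists_max_matching: "finite E \<Longrightarrow> \<exists>M. max_matching E M"
proof -
  assume fE: "finite E"
  have "matching_number E \<in> card ` {M. matching E M}"
    unfolding matching_number_def using matchings_fin[OF fE] matching_empty
    by (intro Max_in) auto
  then show ?thesis unfolding max_matching_def by auto
qed

theorem mainTheorem3:
  fixes V :: "'a set" and E :: "'a set set"
  assumes "is_tree V E"
    and "\<forall>a\<in>GE_A V E. degree E a \<le> 3"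
  shows "card (GE_D V E) \<le> 2 * card (GE_A V E) + 1
    \<and> (card (GE_D V E) = 2 * card (GE_A V E) + 1 \<longrightarrow>
         connected_graph (GE_A V E \<union> GE_D V E) (induced_edges E (GE_A V E \<union> GE_D V E))
       \<and> (\<forall>a\<in>GE_A V E. degree E a = 3)
       \<and> independent_set E (GE_A V E)
       \<and> GE_C V E = {})
    \<and> real (matching_number E) \<ge> (real (card V) - 1) / 3"
proof -
  note T = assms(1)
  define A where "A = GE_A V E"
  define D where "D = GE_D V E"
  define C where "C = GE_C V E"
  have sg: "simple_graph V E" using tree_sg[OF T] .
  have fE: "finite E" using sg_finE[OF sg] .
  have fV: "finite V" using sg unfolding simple_graph_def by auto
  have Vne: "V \<noteq> {}" and conn: "connected_graph V E" using T unfolding is_tree_def by auto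
  have nc: "\<And>xs. \<not> is_cycle E xs" using tree_nocyc[OF T] by blast
  have DV: "D \<subseteq> V" unfolding D_def GE_D_def by auto
  have AV: "A \<subseteq> V" unfolding A_def GE_A_def neighbours_def using sg_edge_ne[OF sg] by blast
  have AD: "A \<inter> D = {}" unfolding A_def D_def GE_A_def by auto
  have Cdef: "C = V - (A \<union> D)" unfolding C_def A_def D_def GE_C_def by simp
  have fA: "finite A" "finite D" "finite C" using AV DV fV Cdef finite_subset by auto
  have cardV: "card V = card A + card D + card C"
  proof -
    have "V = (A \<union> D) \<union> C" using AV DV Cdef by auto
    moreover have "(A \<union> D) \<inter> C = {}" using Cdef by auto
    ultimately have "card V = card (A \<union> D) + card C" using fA by (simp add: card_Un_disjoint)
    then show ?thesis using AD fA by (simp add: card_Un_disjoint)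
  qed
  have Dind: "\<And>u w. u \<in> D \<Longrightarrow> w \<in> D \<Longrightarrow> {u,w} \<notin> E" using D_indep[OF T] unfolding D_def by blast
  have DnbA: "\<And>u w. u \<in> D \<Longrightarrow> w \<notin> D \<Longrightarrow> {u,w} \<in> E \<Longrightarrow> w \<in> A"
  proof -
    fix u w assume h: "u \<in> D" "w \<notin> D" "{u,w} \<in> E"
    have "{w,u} \<in> E" using h(3) by (simp add: insert_commute)
    then have "w \<in> neighbours E u" unfolding neighbours_def by simp
    then show "w \<in> A" using h unfolding A_def D_def GE_A_def by blast
  qed
  have edge_id: "\<And>e. e \<in> E \<Longrightarrow> card (e \<inter> A) + (if e \<subseteq> C then 1 else 0) = 1 + (if e \<subseteq> A then 1 else 0)"
  proof -
    fix e assume e: "e \<in> E"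
    obtain u w where uw: "e = {u,w}" "u \<noteq> w" "u \<in> V" "w \<in> V" using sg_edge[OF sg e] by blast
    have pu: "u \<in> A \<or> u \<in> D \<or> u \<in> C" and pw: "w \<in> A \<or> w \<in> D \<or> w \<in> C" using uw Cdef by auto
    have nd: "\<not> (u \<in> D \<and> w \<in> D)" using Dind e uw by blast
    have ndc1: "u \<in> D \<Longrightarrow> w \<in> A" using DnbA[of u w] e uw nd by auto
    have ndc2: "w \<in> D \<Longrightarrow> u \<in> A" using DnbA[of w u] e uw nd by (auto simp: insert_commute)
    have disj: "\<And>x. x \<in> A \<Longrightarrow> x \<notin> C" "\<And>x. x \<in> D \<Longrightarrow> x \<notin> C" "\<And>x. x \<in> A \<Longrightarrow> x \<notin> D"
      using Cdef AD by auto
    show "card (e \<inter> A) + (if e \<subseteq> C then 1 else 0) = 1 + (if e \<subseteq> A then 1 else 0)"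
      using pu pw ndc1 ndc2 disj uw by (auto simp: Int_insert_left)
  qed
  define S where "S = (\<Sum>a\<in>A. degree E a)"
  define eA where "eA = card (induced_edges E A)"
  define eC where "eC = card (induced_edges E C)"
  have S_eq: "S + eC = card E + eA"
  proof -
    have "S + eC = (\<Sum>e\<in>E. card (e \<inter> A) + (if e \<subseteq> C then 1 else 0))"
      unfolding S_def eC_def induced_edges_def using degree_sum[OF fA(1) fE] fE
      by (simp add: sum.distrib card_filter_sum)
    also have "\<dots> = (\<Sum>e\<in>E. 1 + (if e \<subseteq> A then 1 else 0))" using edge_id by (rule sum.cong[OF refl])
    also have "\<dots> = (\<Sum>e\<in>E. 1) + (\<Sum>e\<in>E. if e \<subseteq> A then 1 else 0)" by (rule sum.distrib)
    also have "\<dots> = card E + eA" unfolding eA_def induced_edges_def using fE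
      by (simp add: card_filter_sum)
    finally show ?thesis .
  qed
  have degA: "\<forall>a\<in>A. degree E a \<le> 3" using assms(2) A_def by simp
  have S3: "S \<le> 3 * card A" unfolding S_def using sum_mono[of A "\<lambda>a. degree E a" "\<lambda>_. 3"] degA by simp
  have Ecard: "card V - 1 \<le> card E" using connected_edges[OF sg conn Vne] .
  have eCb: "eC + (if C = {} then 0 else 1) \<le> card C"
  proof (cases "C = {}")
    case True
    have "induced_edges E C = {}" unfolding True induced_edges_def using sg_card2[OF sg] by fastforce
    then show ?thesis unfolding eC_def using True by simp
  next
    case False
    have "eC \<le> card C - 1" unfolding eC_def using forest_edges[OF sg nc fA(3) False] .
    moreover have "card C > 0" using False fA by (simp add: card_gt_0_iff)
    ultimately show ?thesis using False by simp
  qed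
  have Vpos: "card V \<ge> 1" using Vne fV by (simp add: Suc_leI card_gt_0_iff)
  have key: "card D + eA + (if C = {} then 0 else 1) \<le> 2 * card A + 1"
    using S_eq S3 Ecard eCb cardV Vpos by linarith
  have part1: "card D \<le> 2 * card A + 1" using key by simp
  have part2: "card D = 2 * card A + 1 \<longrightarrow>
         connected_graph (A \<union> D) (induced_edges E (A \<union> D))
       \<and> (\<forall>a\<in>A. degree E a = 3) \<and> independent_set E A \<and> C = {}"
  proof
    assume eq: "card D = 2 * card A + 1"
    have Ce: "C = {}" using key eq by (auto split: if_splits)
    have eA0: "eA = 0" using key eq by (auto split: if_splits)
    have AUD: "A \<union> D = V" using Ce Cdef AV DV by auto
    have ind: "induced_edges E V = E" unfolding induced_edges_def using sg_edge_sub[OF sg] by auto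
    have c1: "connected_graph (A \<union> D) (induced_edges E (A \<union> D))" using AUD ind conn by simp
    have S3e: "S = 3 * card A" using S_eq S3 Ecard eCb cardV Vpos eq eA0 Ce by (simp add: eC_def)
    have c2: "\<forall>a\<in>A. degree E a = 3"
    proof (rule ccontr)
      assume "\<not> (\<forall>a\<in>A. degree E a = 3)"
      then obtain a where a: "a \<in> A" "degree E a \<noteq> 3" by blast
      then have lt3: "degree E a < 3" using degA by force
      have "S < (\<Sum>a\<in>A. 3)" unfolding S_def
      proof (rule sum_strict_mono_ex1[OF fA(1)])
        show "\<forall>x\<in>A. degree E x \<le> 3" using degA .
        show "\<exists>a\<in>A. degree E a < 3" using a(1) lt3 by blast
      qed
      then show False using S3e by simp
    qed
    have c3: "independent_set E A"
      unfolding independent_set_def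
    proof (intro ballI)
      fix u w assume uw: "u \<in> A" "w \<in> A"
      have fin: "finite (induced_edges E A)" unfolding induced_edges_def using fE by auto
      have "induced_edges E A = {}" using eA0 fin eA_def by simp
      then show "{u,w} \<notin> E" using uw unfolding induced_edges_def by auto
    qed
    show "connected_graph (A \<union> D) (induced_edges E (A \<union> D))
       \<and> (\<forall>a\<in>A. degree E a = 3) \<and> independent_set E A \<and> C = {}" using c1 c2 c3 Ce by blast
  qed
  obtain M where M: "max_matching E M" using exists_max_matching[OF fE] by blast
  have mM: "matching E M" and cM: "card M = matching_number E" using M unfolding max_matching_def by auto
  have ME: "M \<subseteq> E" using mM unfolding matching_def by auto
  have UM: "\<Union>M \<subseteq> V" using ME sg_edge_sub[OF sg] by blast
  define U where "U = V - \<Union>M"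
  have UD: "U \<subseteq> D" unfolding U_def D_def GE_D_def using M by auto
  have fUM: "finite (\<Union>M)" using UM fV finite_subset by blast
  have fU: "finite U" unfolding U_def using fV by simp
  have cardV2: "card V = 2 * card M + card U"
  proof -
    have "V = \<Union>M \<union> U" "\<Union>M \<inter> U = {}" unfolding U_def using UM by auto
    then have "card V = card (\<Union>M) + card U" using card_Un_disjoint[OF fUM fU] by simp
    then show ?thesis using matching_card_union[OF sg mM] by simp
  qed
  have partner: "\<And>a. a \<in> A \<Longrightarrow> \<exists>b. {a,b} \<in> M"
  proof -
    fix a assume a: "a \<in> A"
    have "a \<in> \<Union>M"
    proof (rule ccontr)
      assume "a \<notin> \<Union>M"
      then have "a \<in> D" using a AV M unfolding D_def GE_D_def by auto
      then show False using a AD by auto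
    qed
    then obtain e where "e \<in> M" "a \<in> e" by blast
    then have eE: "e \<in> E" "e \<in> M" "a \<in> e" using ME by auto
    obtain b where "e = {a,b}" using sg_edge_x[OF sg eE(1) eE(3)] by (elim exE conjE) (rule that)
    then show "\<exists>b. {a,b} \<in> M" using eE(2) by blast
  qed
  define p where "p a = (SOME b. {a,b} \<in> M)" for a
  have pM: "\<And>a. a \<in> A \<Longrightarrow> {a, p a} \<in> M"
  proof -
    fix a assume "a \<in> A"
    then have "\<exists>b. {a,b} \<in> M" by (rule partner)
    then show "{a, p a} \<in> M" unfolding p_def by (rule someI_ex)
  qed
  have pD: "\<And>a. a \<in> A \<Longrightarrow> p a \<in> D"
  proof -
    fix a assume a: "a \<in> A"
    have "a \<in> GE_A V E" using a A_def by simp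
    then have "p a \<in> GE_D V E" using partner_D[OF T _ M pM[OF a]] by blast
    then show "p a \<in> D" using D_def by simp
  qed
  have pinj: "inj_on p A"
  proof (rule inj_onI)
    fix a a' assume aa: "a \<in> A" "a' \<in> A" "p a = p a'"
    have "{a, p a} = {a', p a'}" using matching_unique[OF mM pM[OF aa(1)] pM[OF aa(2)], of "p a"] aa by simp
    moreover have "a \<noteq> p a"
    proof
      assume "a = p a"
      then have "a \<in> D" using pD[OF aa(1)] by simp
      then show False using aa(1) AD by blast
    qed
    ultimately show "a = a'" using aa by (auto simp: doubleton_eq_iff)
  qed
  have pU: "p ` A \<inter> U = {}"
  proof (rule ccontr)
    assume "p ` A \<inter> U \<noteq> {}"
    then obtain a where a: "a \<in> A" "p a \<in> U" by blast
    have "p a \<in> \<Union>M" using pM[OF a(1)] by blast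
    then show False using a(2) unfolding U_def by blast
  qed
  have "card (p ` A) + card U \<le> card D"
  proof -
    have "p ` A \<union> U \<subseteq> D" using pD UD by blast
    then have "card (p ` A \<union> U) \<le> card D" using fA by (simp add: card_mono)
    moreover have "card (p ` A \<union> U) = card (p ` A) + card U"
      using card_Un_disjoint[OF finite_imageI[OF fA(1)] fU pU] .
    ultimately show ?thesis by simp
  qed
  then have AU: "card A + card U \<le> card D" using card_image[OF pinj] by simp
  have "3 * card U \<le> card V + 2" using AU part1 cardV by linarith
  then have "card V \<le> 3 * card M + 1" using cardV2 by linarith
  then have "real (card V) \<le> 3 * real (card M) + 1" by (metis of_nat_le_iff of_nat_Suc of_nat_mult of_nat_numeral Suc_eq_plus1 add.commute)
  then have part3: "real (matching_number E) \<ge> (real (card V) - 1) / 3"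
    using cM by simp
  show ?thesis unfolding A_def[symmetric] D_def[symmetric] C_def[symmetric]
    using part1 part2 part3 by blast
qed

end
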